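(* For any $j \neq 1$ and any unit vector $s \in \mathbb{S}^{d-1}$, with $\Delta_w = w_1 - w_1^*$, $v = X-\mu_j^*$ and $\beta = (R_{j1}^* )^2/(64(\sigma_1^* \vee \sigma_j^* )^2)$, $$\mathbb{E}_{X\sim\mathcal{D}_j} [\Delta_w] \le \left( 3 (\pi_1^*/\pi_j^* ) + 5 \right) \exp \left(-\beta \right),\qquad |\mathbb{E}_{X\sim\mathcal{D}_j} [\Delta_w \langle v,s\rangle]| \le \left(3 (\pi_1^* / \pi_j^* ) \sigma_j^* + 5R_{j1}^* \right) \exp \left (-\beta \right).$$
   Context: $\mathcal{G}^*$ is a mixture with density $\sum_{l=1}^k \pi_l^* \mathcal{N}(\mu_l^*, (\sigma_l^* )^2 I_d)$ satisfying, for a universal constant $C\ge 64$, $\|\mu_i^* - \mu_l^*\| \ge C (\sigma_i^* \vee \sigma_l^* ) \sqrt{\log k + \log(\rho_\sigma \rho_\pi)}$ for all $i\ne l$, where $\rho_\pi = \max_i \pi_i^*/\min_i \pi_i^*$, $\rho_\sigma = \max_i \sigma_i^*/\min_i \sigma_i^*$. $\mathcal{D}_j = \mathcal{N}(\mu_j^*, (\sigma_j^* )^2 I_d)$ is the $j$-th component. Current estimates $\{(\pi_i,\mu_i,\sigma_i)\}$ satisfy for all $i$: $\|\mu_i - \mu_i^*\| \le \frac{\sigma_i^*}{16}\min_{l\ne i}\frac{\|\mu_i^*-\mu_l^*\|}{\sigma_i^*\vee\sigma_l^*}$, $|\pi_i-\pi_i^*|\le \pi_i^*/2$, $|\sigma_i^2-(\sigma_i^*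 )^2|\le 0.5(\sigma_i^* )^2/\sqrt d$. $R_{j1}^* = \|\mu_j^*-\mu_1^*\|$. The E-step weight is $w_1(X) = \frac{\pi_1 \exp(-\|X - \mu_1\|^2/(2 \sigma_1^2) - d \log (\sigma_1^2) / 2)}{\sum_{l=1}^k \pi_l \exp(-\|X - \mu_l\|^2/(2 \sigma_l^2) - d \log (\sigma_l^2) / 2)}$, and $w_1^*$ is the same expression with the true parameters in place of the estimates. *)

theory Defs
  imports "HOL-Analysis.Analysis"
begin

definition gauss_density :: "real ^ 'd \<Rightarrow> real \<Rightarrow> real ^ 'd \<Rightarrow> real" where
  "gauss_density mu sg x =
     (2 * pi * sg\<^sup>2) powr (- real CARD('d) / 2) * exp (- (norm (x - mu))\<^sup>2 / (2 * sg\<^sup>2))"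

definition gauss_expect :: "real ^ 'd \<Rightarrow> real \<Rightarrow> (real ^ 'd \<Rightarrow> real) \<Rightarrow> real" where
  "gauss_expect mu sg f = (\<integral>x. gauss_density mu sg x * f x \<partial>lborel)"

definition comp_term :: "(nat \<Rightarrow> real) \<Rightarrow> (nat \<Rightarrow> real ^ 'd) \<Rightarrow> (nat \<Rightarrow> real) \<Rightarrow> nat \<Rightarrow> real ^ 'd \<Rightarrow> real" where
  "comp_term p m s l x =
     p l * exp (- (norm (x - m l))\<^sup>2 / (2 * (s l)\<^sup>2) - real CARD('d) * ln ((s l)\<^sup>2) / 2)"

definition estep_weight :: "nat \<Rightarrow> (nat \<Rightarrow> real) \<Rightarrow> (nat \<Rightarrow> real ^ 'd) \<Rightarrow> (nat \<Rightarrow> real) \<Rightarrow> nat \<Rightarrow> real ^ 'd \<Rightarrow> real" where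
  "estep_weight k p m s i x = comp_term p m s i x / (\<Sum>l = 1..k. comp_term p m s l x)"

end

theory Submission
  imports Defs "HOL-Probability.Probability" "HOL-Analysis.Harmonic_Numbers"
begin


lemma gauss1:
  fixes A z :: real assumes A: "A > 0"
  shows "has_bochner_integral lborel (\<lambda>u. exp (- A * (u - z)\<^sup>2)) (sqrt (pi / A))"
proof -
  define sd where "sd = sqrt (1 / (2*A))"
  have sd: "sd > 0" "sd\<^sup>2 = 1/(2*A)" using A by (auto simp: sd_def)
  have eq: "exp (- A * (u - z)\<^sup>2) = sqrt (2*pi * sd\<^sup>2) * normal_density z sd u" for u
    using A sd by (simp add: normal_density_def field_simps)
  have "has_bochner_integral lborel (\<lambda>u. sqrt (2*pi * sd\<^sup>2) * normal_density z sd u) (sqrt (2*pi * sd\<^sup>2) * 1)"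
    by (intro has_bochner_integral_mult_right) (use integrable_normal_density[OF sd(1)] integral_normal_density[OF sd(1)] in \<open>auto simp: has_bochner_integral_iff\<close>)
  moreover have "sqrt (2*pi * sd\<^sup>2) * 1 = sqrt (pi / A)" using sd A by simp
  ultimately show ?thesis unfolding eq by simp
qed

lemma gaussd:
  fixes z :: "'a::euclidean_space" assumes A: "A > 0"
  shows "has_bochner_integral lborel (\<lambda>x. exp (- A * (norm (x - z))\<^sup>2)) (sqrt (pi / A) ^ DIM('a))"
proof -
  interpret product_sigma_finite "\<lambda>b::'a. lborel :: real measure" by standard
  let ?g = "\<lambda>f. \<Sum>b\<in>Basis. f b *\<^sub>R (b::'a)"
  have nrm: "(norm (?g f - z))\<^sup>2 = (\<Sum>b\<in>Basis. (f b - z \<bullet> b)\<^sup>2)" for f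
  proof -
    have "(norm (?g f - z))\<^sup>2 = (\<Sum>b\<in>Basis. ((?g f - z) \<bullet> b)\<^sup>2)"
      by (subst power2_norm_eq_inner, subst euclidean_inner) (simp add: power2_eq_square)
    also have "\<dots> = (\<Sum>b\<in>Basis. (f b - z \<bullet> b)\<^sup>2)"
      by (intro sum.cong refl) (simp add: inner_diff_left inner_sum_left inner_Basis if_distrib sum.delta cong: if_cong)
    finally show ?thesis .
  qed
  have fe: "(\<lambda>x. exp (- A * (norm (x - z))\<^sup>2)) \<circ> ?g = (\<lambda>f. \<Prod>b\<in>Basis. exp (- A * (f b - z \<bullet> b)\<^sup>2))"
  proof
    fix f :: "'a \<Rightarrow> real"
    have "exp (- A * (\<Sum>b\<in>Basis. (f b - z \<bullet> b)\<^sup>2)) = exp (\<Sum>b\<in>Basis. - A * (f b - z \<bullet> b)\<^sup>2)"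
      by (simp add: sum_distrib_left)
    also have "\<dots> = (\<Prod>b\<in>Basis. exp (- A * (f b - z \<bullet> b)\<^sup>2))" by (rule exp_sum) simp
    finally show "((\<lambda>x. exp (- A * (norm (x - z))\<^sup>2)) \<circ> ?g) f = (\<Prod>b\<in>Basis. exp (- A * (f b - z \<bullet> b)\<^sup>2))"
      by (simp add: nrm)
  qed
  have int1: "integrable lborel (\<lambda>u. exp (- A * (u - z \<bullet> b)\<^sup>2))" for b
    using gauss1[OF A] by (auto simp: has_bochner_integral_iff)
  have int1': "integrable lborel (\<lambda>u. exp (- (A * (u - z \<bullet> b)\<^sup>2)))" for b
    using int1[of b] by simp
  have val1: "(\<integral>u. exp (- (A * (u - z \<bullet> b)\<^sup>2)) \<partial>lborel) = sqrt (pi / A)" for b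
    using gauss1[OF A, of "z \<bullet> b", THEN has_bochner_integral_integral_eq] by simp
  have i1: "integrable (\<Pi>\<^sub>M b\<in>Basis. lborel) (\<lambda>f. \<Prod>b\<in>Basis. exp (- A * (f b - z \<bullet> b)\<^sup>2))"
    apply (rule product_integrable_prod) apply simp apply (rule int1) done
  have v1: "(\<integral>f. (\<Prod>b\<in>Basis. exp (- A * (f b - z \<bullet> b)\<^sup>2)) \<partial>(\<Pi>\<^sub>M b\<in>Basis. lborel)) = sqrt (pi / A) ^ DIM('a)"
    by (subst product_integral_prod) (auto intro!: int1' simp: val1)
  have meas: "?g \<in> measurable (\<Pi>\<^sub>M b\<in>Basis. lborel) borel" by measurable
  have "integrable lborel (\<lambda>x. exp (- A * (norm (x - z))\<^sup>2))"
    apply (subst lborel_eq)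
    apply (subst integrable_distr_eq[OF meas])
    using i1 fe by (auto simp: comp_def)
  moreover have "(\<integral>x. exp (- A * (norm (x - z))\<^sup>2) \<partial>lborel) = sqrt (pi / A) ^ DIM('a)"
    apply (subst lborel_eq)
    apply (subst integral_distr[OF meas])
    using v1 fe by (auto simp: comp_def)
  ultimately show ?thesis by (simp add: has_bochner_integral_iff)
qed

lemma quad_form:
  fixes x c0 c1 c2 e :: "'a::real_inner"
  shows "a0*(norm(x-c0))\<^sup>2 + a1*(norm(x-c1))\<^sup>2 + a2*(norm(x-c2))\<^sup>2 + inner e x + f
    = -(-(a0+a1+a2))*(norm x)\<^sup>2 + inner (e - 2 *\<^sub>R (a0 *\<^sub>R c0 + a1 *\<^sub>R c1 + a2 *\<^sub>R c2)) x
      + (a0*(norm c0)\<^sup>2 + a1*(norm c1)\<^sup>2 + a2*(norm c2)\<^sup>2 + f)"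
proof -
  have n: "(norm (x - c))\<^sup>2 = (norm x)\<^sup>2 - 2 * inner c x + (norm c)\<^sup>2" for c
    by (simp add: power2_norm_eq_inner inner_diff_left inner_diff_right inner_commute)
  show ?thesis unfolding n by (simp add: inner_diff_left inner_add_left algebra_simps)
qed

lemma sq_complete:
  fixes B x x0 :: "'a::real_inner"
  assumes Q: "\<And>x. Q x = -A*(norm x)\<^sup>2 + inner B x + C0" and A: "A \<noteq> 0"
    and x0: "x0 = (1/(2*A)) *\<^sub>R B"
  shows "Q x = Q x0 - A * (norm (x - x0))\<^sup>2"
proof -
  have B: "B = (2*A) *\<^sub>R x0" using A x0 by simp
  have n: "(norm (y - x0))\<^sup>2 = (norm y)\<^sup>2 - 2 * inner x0 y + (norm x0)\<^sup>2" for y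
    by (simp add: power2_norm_eq_inner inner_diff_left inner_diff_right inner_commute)
  have i: "inner B y = 2 * A * inner x0 y" for y unfolding B by simp
  show ?thesis unfolding Q i n by (simp add: power2_norm_eq_inner algebra_simps)
qed

lemma gauss_quad:
  fixes c0 c1 c2 e :: "'a::euclidean_space" and f a0 a1 a2 A K :: real
  assumes A: "A > 0" and Adef: "A = -(a0+a1+a2)"
  defines "Q \<equiv> (\<lambda>x. a0*(norm(x-c0))\<^sup>2 + a1*(norm(x-c1))\<^sup>2 + a2*(norm(x-c2))\<^sup>2 + inner e x + f)"
  defines "x0 \<equiv> (1/(2*A)) *\<^sub>R (e - 2 *\<^sub>R (a0 *\<^sub>R c0 + a1 *\<^sub>R c1 + a2 *\<^sub>R c2))"
  shows "has_bochner_integral lborel (\<lambda>x. K * exp (Q x)) (K * exp (Q x0) * sqrt (pi / A) ^ DIM('a))"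
proof -
  have Qf: "Q x = -A*(norm x)\<^sup>2 + inner (e - 2 *\<^sub>R (a0 *\<^sub>R c0 + a1 *\<^sub>R c1 + a2 *\<^sub>R c2)) x
      + (a0*(norm c0)\<^sup>2 + a1*(norm c1)\<^sup>2 + a2*(norm c2)\<^sup>2 + f)" for x
    unfolding Q_def Adef by (rule quad_form)
  have eq: "K * exp (Q x) = (K * exp (Q x0)) * exp (- A * (norm (x - x0))\<^sup>2)" for x
  proof -
    have "Q x = Q x0 - A * (norm (x - x0))\<^sup>2"
      by (rule sq_complete[OF Qf]) (use A in \<open>simp_all add: x0_def\<close>)
    then have "exp (Q x) = exp (Q x0 + (- A * (norm (x - x0))\<^sup>2))"
      by (metis diff_conv_add_uminus mult_minus_left)
    also have "\<dots> = exp (Q x0) * exp (- A * (norm (x - x0))\<^sup>2)" by (rule exp_add)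
    finally show ?thesis by simp
  qed
  have feq: "(\<lambda>x. K * exp (Q x)) = (\<lambda>x. (K * exp (Q x0)) * exp (- A * (norm (x - x0))\<^sup>2))"
    by (rule ext) (rule eq)
  show ?thesis unfolding feq by (intro has_bochner_integral_mult_right gaussd A)
qed

lemma ln_lower: fixes u :: real assumes "-1/2 \<le> u" "u \<le> 1" shows "u - 2*u\<^sup>2 \<le> ln (1 + u)"
proof (cases "u \<ge> 0")
  case True then show ?thesis using ln_one_plus_pos_lower_bound[of u] assms by (smt (verit) zero_le_power2)
next
  case False then show ?thesis using ln_one_minus_pos_lower_bound[of "-u"] assms by simp
qed

lemma dimfac:
  fixes v r :: real assumes v: "v > 0" and r: "-1/2 \<le> r - 1" "r - 1 \<le> 1"
  shows "ln (1 + v/8 - r/8) - ln v/8 + ln r/8 \<ge> - 2 * (r-1)\<^sup>2 / 7"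
proof -
  define \<delta> where "\<delta> = r - 1"
  define x where "x = 1 - \<delta>/7"
  define m where "m = 1 + v/8 - r/8"
  have x: "x > 0" using r by (simp add: x_def \<delta>_def)
  have rp: "r > 0" using r by simp
  have mx: "m = v/8 + 7*x/8" by (simp add: m_def x_def \<delta>_def field_simps)
  have m: "m > 0" using v x mx by simp
  have l1: "ln (v/m) \<le> v/m - 1" using v m by (intro ln_le_minus_one) simp
  have l2: "ln (x/m) \<le> x/m - 1" using x m by (intro ln_le_minus_one) simp
  have "ln v/8 + 7 * ln x/8 - ln m = ln (v/m)/8 + 7 * ln (x/m) / 8"
    using v x m by (simp add: ln_div field_simps)
  also have "\<dots> \<le> (v/m - 1)/8 + 7*(x/m - 1)/8" using add_mono[OF divide_right_mono[OF l1, of 8] divide_right_mono[OF mult_left_mono[OF l2, of 7], of 8]] by simp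
  also have "\<dots> = 0" using m by (simp add: mx field_simps)
  finally have a: "ln m - ln v/8 \<ge> 7 * ln x / 8" by simp
  have b: "ln x \<ge> -\<delta>/7 - 2*(\<delta>/7)\<^sup>2"
  proof -
    have e1: "x = 1 + (-\<delta>/7)" by (simp add: x_def)
    have e2: "(-\<delta>/7)\<^sup>2 = (\<delta>/7)\<^sup>2" by (simp add: power2_eq_square)
    show ?thesis using ln_lower[of "-\<delta>/7"] r unfolding e1 e2 by (simp add: \<delta>_def)
  qed
  have c: "ln r \<ge> \<delta> - 2*\<delta>\<^sup>2" using ln_lower[of \<delta>] r by (simp add: \<delta>_def)
  have "ln m - ln v/8 + ln r/8 \<ge> 7/8 * (-\<delta>/7 - 2*(\<delta>/7)\<^sup>2) + (\<delta> - 2*\<delta>\<^sup>2)/8"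
  proof -
    have "7/8 * (-\<delta>/7 - 2*(\<delta>/7)\<^sup>2) \<le> 7/8 * ln x" using b by (rule mult_left_mono) simp
    moreover have "(\<delta> - 2*\<delta>\<^sup>2)/8 \<le> ln r / 8" using c by (rule divide_right_mono) simp
    ultimately show ?thesis using a by linarith
  qed
  moreover have "7/8 * (-\<delta>/7 - 2*(\<delta>/7)\<^sup>2) + (\<delta> - 2*\<delta>\<^sup>2)/8 = - 2 * \<delta>\<^sup>2 / 7"
    by (simp add: power2_eq_square field_simps)
  ultimately show ?thesis by (simp add: m_def \<delta>_def)
qed

lemma qbound:
  fixes x muj m1 mj s :: "'a::real_inner" and tau sig1 M R s1 sj sgn :: real
  assumes tau: "tau > 0" and sig1: "sig1 > 0" and M: "M = max sig1 tau" and R: "R\<^sup>2 \<ge> 2000 * M\<^sup>2" "R \<ge> 0"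
    and s1: "s1 > 0" "s1 \<le> 3/2 * sig1\<^sup>2" and sj: "sj \<ge> tau\<^sup>2/2"
    and c1: "norm (m1 - muj) \<ge> 15/16 * R" and c2: "norm (mj - muj) \<le> tau * R / (16 * M)"
    and sgn: "\<bar>sgn\<bar> \<le> 1" and s: "norm s = 1"
  shows "-(norm (x - muj))\<^sup>2/(2*tau\<^sup>2) - (norm (x - m1))\<^sup>2/(16* s1) + (norm (x - mj))\<^sup>2/(16* sj)
         + sgn * inner (x - muj) s / tau \<le> - (R\<^sup>2/(64*M\<^sup>2)) - 3"
proof -
  define t where "t = norm (x - muj)"
  define c where "c = norm (mj - muj)"
  define D where "D = 15/16 * R"
  have Mp: "M > 0" "tau \<le> M" "sig1 \<le> M" using M tau by auto
  have t0: "t \<ge> 0" "c \<ge> 0" by (auto simp: t_def c_def)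
  have h1: "sgn * inner (x - muj) s / tau \<le> t / tau"
  proof -
    have "\<bar>inner (x - muj) s\<bar> \<le> t" using Cauchy_Schwarz_ineq2[of "x - muj" s] s by (simp add: t_def)
    then have "sgn * inner (x - muj) s \<le> t"
      using sgn by (smt (verit) abs_mult mult_left_le_one_le abs_ge_zero abs_le_iff)
    then show ?thesis using tau by (simp add: divide_right_mono)
  qed
  have h2: "norm (x - mj) \<le> t + c"
    using norm_triangle_ineq4[of "x - muj" "mj - muj"] by (simp add: t_def c_def)
  have h3: "(norm (x - mj))\<^sup>2/(16* sj) \<le> (t\<^sup>2 + c\<^sup>2)/(4*tau\<^sup>2)"
  proof -
    have "(norm (x - mj))\<^sup>2 \<le> (t + c)\<^sup>2" using h2 by (simp add: power_mono)
    also have "\<dots> \<le> 2*t\<^sup>2 + 2*c\<^sup>2" by (smt (verit) zero_le_power2 power2_diff power2_sum)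
    finally have a: "(norm (x - mj))\<^sup>2 \<le> 2*t\<^sup>2 + 2*c\<^sup>2" .
    have sjp: "sj > 0" using sj tau by (smt (verit) zero_less_power divide_pos_pos)
    have "(norm (x - mj))\<^sup>2/(16* sj) \<le> (2*t\<^sup>2 + 2*c\<^sup>2)/(16* sj)" using a sjp by (simp add: divide_right_mono)
    also have "\<dots> \<le> (2*t\<^sup>2 + 2*c\<^sup>2)/(16*(tau\<^sup>2/2))"
      using sj sjp tau by (intro divide_left_mono) (auto simp: add_nonneg_nonneg)
    also have "\<dots> = (t\<^sup>2 + c\<^sup>2)/(4*tau\<^sup>2)" using tau by (simp add: field_simps)
    finally show ?thesis .
  qed
  have h4: "norm (x - m1) \<ge> D - t"
    using norm_triangle_ineq4[of "m1 - x" "muj - x"] c1 by (simp add: t_def D_def norm_minus_commute)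
  have h5: "c\<^sup>2/(4*tau\<^sup>2) \<le> R\<^sup>2/(1024*M\<^sup>2)"
  proof -
    have "c\<^sup>2 \<le> (tau * R / (16 * M))\<^sup>2" using c2 t0 by (simp add: c_def power_mono)
    then have "c\<^sup>2/(4*tau\<^sup>2) \<le> (tau * R / (16 * M))\<^sup>2/(4*tau\<^sup>2)" using tau by (simp add: divide_right_mono)
    also have "\<dots> = R\<^sup>2/(1024*M\<^sup>2)" using tau Mp by (simp add: field_simps power2_eq_square)
    finally show ?thesis .
  qed
  define X where "X = (if t \<le> D then (D - t)\<^sup>2/(24*M\<^sup>2) else 0)"
  have h6: "(norm (x - m1))\<^sup>2/(16* s1) \<ge> X"
  proof (cases "t \<le> D")
    case True
    have "(D - t)\<^sup>2 \<le> (norm (x - m1))\<^sup>2" using h4 True by (simp add: power_mono)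
    moreover have "16* s1 \<le> 24*M\<^sup>2"
    proof -
      have "sig1\<^sup>2 \<le> M\<^sup>2" using Mp sig1 by (intro power_mono) auto
      then show ?thesis using s1 by linarith
    qed
    ultimately have "(D - t)\<^sup>2/(24*M\<^sup>2) \<le> (norm (x - m1))\<^sup>2/(16* s1)"
      using s1 by (intro frac_le) auto
    then show ?thesis using True by (simp add: X_def)
  qed (use s1 in \<open>simp add: X_def\<close>)
  have h7: "t/tau - t\<^sup>2/(8*tau\<^sup>2) \<le> 2"
  proof -
    have "0 \<le> (t/tau - 4)\<^sup>2" by simp
    then show ?thesis using tau by (simp add: power2_eq_square field_simps)
  qed
  have h8: "t\<^sup>2/(8*M\<^sup>2) \<le> t\<^sup>2/(8*tau\<^sup>2)" using Mp tau by (intro divide_left_mono) (auto intro!: power_mono)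
  have h9: "t\<^sup>2/(8*M\<^sup>2) + X \<ge> D\<^sup>2/(32*M\<^sup>2)"
  proof (cases "t \<le> D")
    case True
    have "0 \<le> (2*t - D/2)\<^sup>2" by simp
    then have "D\<^sup>2/32 \<le> t\<^sup>2/8 + (D - t)\<^sup>2/24" by (simp add: power2_eq_square field_simps)
    then show ?thesis using True Mp by (simp add: X_def add_divide_distrib[symmetric] divide_right_mono
          flip: divide_divide_eq_left)
  next
    case False
    then have "D\<^sup>2 \<le> t\<^sup>2" using R by (intro power_mono) (auto simp: D_def)
    then show ?thesis using False Mp by (simp add: X_def divide_right_mono frac_le)
  qed
  have fin: "2 + R\<^sup>2/(1024*M\<^sup>2) - D\<^sup>2/(32*M\<^sup>2) \<le> - (R\<^sup>2/(64*M\<^sup>2)) - 3"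
  proof -
    have "R\<^sup>2/M\<^sup>2 \<ge> 2000" using R Mp by (simp add: field_simps)
    moreover have "2 + R\<^sup>2/(1024*M\<^sup>2) - D\<^sup>2/(32*M\<^sup>2) + (R\<^sup>2/(64*M\<^sup>2)) + 3 = 5 - 89/8192 * (R\<^sup>2/M\<^sup>2)"
      by (simp add: D_def power2_eq_square field_simps)
    ultimately show ?thesis by linarith
  qed
  have "-(norm (x - muj))\<^sup>2/(2*tau\<^sup>2) = - t\<^sup>2/(4*tau\<^sup>2) - t\<^sup>2/(8*tau\<^sup>2) - t\<^sup>2/(8*tau\<^sup>2)"
    by (simp add: t_def field_simps)
  moreover have "(t\<^sup>2 + c\<^sup>2)/(4*tau\<^sup>2) = t\<^sup>2/(4*tau\<^sup>2) + c\<^sup>2/(4*tau\<^sup>2)"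
    by (rule add_divide_distrib)
  ultimately show ?thesis using h1 h3 h5 h6 h7 h8 h9 fin unfolding t_def[symmetric] by linarith
qed

lemma core:
  fixes muj m1 mj s :: "real^'d" and tau sig1 M R p1 pj s1 sj sgn :: real
  assumes tau: "tau > 0" and sig1: "sig1 > 0" and M: "M = max sig1 tau" and R: "R\<^sup>2 \<ge> 2000 * M\<^sup>2" "R \<ge> 0"
    and s1: "s1 > 0" "s1 \<le> 3/2 * sig1\<^sup>2" and sj: "sj \<ge> tau\<^sup>2/2"
    and dl: "-1/2 \<le> tau\<^sup>2/sj - 1" "tau\<^sup>2/sj - 1 \<le> 1" "real CARD('d) * (tau\<^sup>2/sj - 1)\<^sup>2 \<le> 1"
    and c1: "norm (m1 - muj) \<ge> 15/16 * R" and c2: "norm (mj - muj) \<le> tau * R / (16 * M)"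
    and p: "p1 > 0" "pj > 0"
    and sgn: "\<bar>sgn\<bar> \<le> 1" and s: "norm s = 1"
  defines "F \<equiv> (\<lambda>x. gauss_density muj tau x * exp ((ln p1 + (- (norm (x - m1))\<^sup>2 / (2 * s1) - real CARD('d) * ln s1 / 2)
             - (ln pj + (- (norm (x - mj))\<^sup>2 / (2 * sj) - real CARD('d) * ln sj / 2))) / 8
             + sgn * inner (x - muj) s / tau))"
  shows "integrable lborel F \<and> integral\<^sup>L lborel F \<le> exp ((ln p1 - ln pj) / 8) * exp (- (R\<^sup>2/(64*M\<^sup>2)) - 2)"
proof -
  define N where "N = real CARD('d)"
  have N1: "N \<ge> 1" unfolding N_def by simp
  have sjp: "sj > 0" using sj tau by (smt (verit) zero_less_power divide_pos_pos)
  define a0 where "a0 = -1/(2*tau\<^sup>2)"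
  define a1 where "a1 = -1/(16 * s1)"
  define a2 where "a2 = 1/(16 * sj)"
  define e where "e = (sgn/tau) *\<^sub>R s"
  define f where "f = -(sgn/tau) * inner muj s"
  define A where "A = -(a0 + a1 + a2)"
  define K where "K = (2*pi*tau\<^sup>2) powr (-N/2) * exp ((ln p1 - ln pj)/8 + (N * ln sj - N * ln s1)/16)"
  define Q where "Q = (\<lambda>x::real^'d. a0*(norm(x-muj))\<^sup>2 + a1*(norm(x-m1))\<^sup>2 + a2*(norm(x-mj))\<^sup>2 + inner e x + f)"
  define x0 where "x0 = (1/(2*A)) *\<^sub>R (e - 2 *\<^sub>R (a0 *\<^sub>R muj + a1 *\<^sub>R m1 + a2 *\<^sub>R mj))"
  have Qeq: "Q x = -(norm (x - muj))\<^sup>2/(2*tau\<^sup>2) - (norm (x - m1))\<^sup>2/(16* s1) + (norm (x - mj))\<^sup>2/(16* sj)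
         + sgn * inner (x - muj) s / tau" for x
    by (simp add: Q_def a0_def a1_def a2_def e_def f_def inner_diff_left inner_diff_right inner_commute field_simps diff_divide_distrib)
  have Fe: "F x = K * exp (Q x)" for x
  proof -
    have "F x = (2*pi*tau\<^sup>2) powr (-N/2) * (exp (-(norm (x - muj))\<^sup>2 / (2*tau\<^sup>2)) *
          exp ((ln p1 + (- (norm (x - m1))\<^sup>2 / (2 * s1) - N * ln s1 / 2)
             - (ln pj + (- (norm (x - mj))\<^sup>2 / (2 * sj) - N * ln sj / 2))) / 8
             + sgn * inner (x - muj) s / tau))"
      by (simp add: F_def gauss_density_def N_def)
    also have "\<dots> = (2*pi*tau\<^sup>2) powr (-N/2) * exp (-(norm (x - muj))\<^sup>2 / (2*tau\<^sup>2) +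
          ((ln p1 + (- (norm (x - m1))\<^sup>2 / (2 * s1) - N * ln s1 / 2)
             - (ln pj + (- (norm (x - mj))\<^sup>2 / (2 * sj) - N * ln sj / 2))) / 8
             + sgn * inner (x - muj) s / tau))"
      by (simp only: exp_add)
    also have "-(norm (x - muj))\<^sup>2 / (2*tau\<^sup>2) +
          ((ln p1 + (- (norm (x - m1))\<^sup>2 / (2 * s1) - N * ln s1 / 2)
             - (ln pj + (- (norm (x - mj))\<^sup>2 / (2 * sj) - N * ln sj / 2))) / 8
             + sgn * inner (x - muj) s / tau)
         = ((ln p1 - ln pj)/8 + (N * ln sj - N * ln s1)/16) + Q x"
      unfolding Qeq by (simp add: field_simps)
    also have "(2*pi*tau\<^sup>2) powr (-N/2) * exp (((ln p1 - ln pj)/8 + (N * ln sj - N * ln s1)/16) + Q x) = K * exp (Q x)"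
      by (simp only: K_def exp_add mult.assoc)
    finally show ?thesis .
  qed
  have Apos: "A > 0"
  proof -
    have "1/(16* sj) \<le> 1/(16*(tau\<^sup>2/2))" using sj sjp tau by (intro divide_left_mono) auto
    moreover have "1/(16*(tau\<^sup>2/2)) < 1/(2*tau\<^sup>2)" using tau by (simp add: field_simps)
    moreover have "1/(16* s1) > 0" using s1 by simp
    moreover have "A = 1/(2*tau\<^sup>2) + 1/(16 * s1) - 1/(16 * sj)" by (simp add: A_def a0_def a1_def a2_def)
    ultimately show ?thesis by linarith
  qed
  have hb: "has_bochner_integral lborel (\<lambda>x. K * exp (Q x)) (K * exp (Q x0) * sqrt (pi / A) ^ DIM(real^'d))"
    unfolding Q_def x0_def by (rule gauss_quad[OF Apos]) (simp add: A_def)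
  have Feq: "F = (\<lambda>x. K * exp (Q x))" using Fe by (intro ext)
  have int: "integrable lborel F" and ival: "integral\<^sup>L lborel F = K * exp (Q x0) * sqrt (pi / A) ^ CARD('d)"
    using hb unfolding Feq by (auto simp: has_bochner_integral_iff)
  have Qb: "Q x0 \<le> - (R\<^sup>2/(64*M\<^sup>2)) - 3"
    unfolding Qeq by (rule qbound[OF tau sig1 M R s1 sj c1 c2 sgn s])
  define v where "v = tau\<^sup>2/s1"
  define r where "r = tau\<^sup>2/sj"
  have vp: "v > 0" "r > 0" using tau s1 sjp by (auto simp: v_def r_def)
  have A2: "2*tau\<^sup>2*A = 1 + v/8 - r/8"
    using tau s1 sjp by (simp add: A_def a0_def a1_def a2_def v_def r_def field_simps)
  have lnsj: "ln sj - ln s1 = ln v - ln r"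
    using tau s1 sjp by (simp add: v_def r_def ln_div)
  have Dfac: "K * sqrt (pi / A) ^ CARD('d) = exp ((ln p1 - ln pj)/8) *
        exp (-N/2 * (ln (1 + v/8 - r/8) - ln v/8 + ln r/8))"
  proof -
    have "sqrt (pi / A) ^ CARD('d) = exp (N/2 * ln (pi / A))"
      using Apos by (simp add: N_def sqrt_def root_powr_inverse powr_def exp_of_nat_mult[symmetric] field_simps)
    moreover have "(2*pi*tau\<^sup>2) powr (-N/2) = exp (-N/2 * ln (2*pi*tau\<^sup>2))"
      using tau by (simp add: powr_def)
    moreover have "N/2 * ln (pi / A) + (-N/2 * ln (2*pi*tau\<^sup>2)) = -N/2 * ln (2*tau\<^sup>2*A)"
    proof -
      have "ln (pi / A) - ln (2*pi*tau\<^sup>2) = - ln (2*tau\<^sup>2*A)"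
        using tau Apos by (simp add: ln_div ln_mult)
      then have "N/2 * (ln (pi / A) - ln (2*pi*tau\<^sup>2)) = N/2 * (- ln (2*tau\<^sup>2*A))" by simp
      then show ?thesis by (simp add: algebra_simps)
    qed
    ultimately have "K * sqrt (pi / A) ^ CARD('d) = exp ((ln p1 - ln pj)/8) *
        exp (-N/2 * ln (2*tau\<^sup>2*A) + (N * ln sj - N * ln s1)/16)"
    proof -
      assume a1: "sqrt (pi / A) ^ CARD('d) = exp (N/2 * ln (pi / A))"
        and a2: "(2*pi*tau\<^sup>2) powr (-N/2) = exp (-N/2 * ln (2*pi*tau\<^sup>2))"
        and a3: "N/2 * ln (pi / A) + (-N/2 * ln (2*pi*tau\<^sup>2)) = -N/2 * ln (2*tau\<^sup>2*A)"
      have "K * sqrt (pi / A) ^ CARD('d) = exp (-N/2 * ln (2*pi*tau\<^sup>2)) * exp ((ln p1 - ln pj)/8 + (N * ln sj - N * ln s1)/16) * exp (N/2 * ln (pi / A))"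
        unfolding K_def a1 a2 ..
      also have "\<dots> = exp ((ln p1 - ln pj)/8 + ((N/2 * ln (pi / A) + (-N/2 * ln (2*pi*tau\<^sup>2))) + (N * ln sj - N * ln s1)/16))"
        by (simp only: exp_add) (simp add: ac_simps)
      also have "\<dots> = exp ((ln p1 - ln pj)/8) * exp (-N/2 * ln (2*tau\<^sup>2*A) + (N * ln sj - N * ln s1)/16)"
        unfolding a3 by (simp only: exp_add)
      finally show ?thesis .
    qed
    also have "-N/2 * ln (2*tau\<^sup>2*A) + (N * ln sj - N * ln s1)/16 = -N/2 * (ln (1 + v/8 - r/8) - ln v/8 + ln r/8)"
    proof -
      have e: "N * ln sj - N * ln s1 = N * ln v - N * ln r" using lnsj by (metis right_diff_distrib)
      show ?thesis unfolding A2 e by (simp add: field_simps)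
    qed
    finally show ?thesis .
  qed
  have dfb: "-N/2 * (ln (1 + v/8 - r/8) - ln v/8 + ln r/8) \<le> 1/7"
  proof -
    define Z where "Z = ln (1 + v/8 - r/8) - ln v/8 + ln r/8"
    have "Z \<ge> - 2 * (r-1)\<^sup>2 / 7" unfolding Z_def
      using dl(1,2) unfolding r_def[symmetric] by (rule dimfac[OF vp(1)])
    then have Zb: "-Z \<le> 2 * (r-1)\<^sup>2 / 7" by linarith
    have "-N/2 * Z = N/2 * (-Z)" by simp
    also have "\<dots> \<le> N/2 * (2 * (r-1)\<^sup>2 / 7)" using Zb N1 by (intro mult_left_mono) auto
    also have "\<dots> = (N * (r-1)\<^sup>2) / 7" by simp
    also have "\<dots> \<le> 1/7" using dl(3) by (simp add: N_def r_def)
    finally show ?thesis unfolding Z_def .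
  qed
  have "integral\<^sup>L lborel F = exp ((ln p1 - ln pj)/8) * (exp (-N/2 * (ln (1 + v/8 - r/8) - ln v/8 + ln r/8)) * exp (Q x0))"
    unfolding ival using Dfac by (simp add: ac_simps)
  also have "\<dots> \<le> exp ((ln p1 - ln pj)/8) * (exp (1/7) * exp (- (R\<^sup>2/(64*M\<^sup>2)) - 3))"
    using dfb Qb by (intro mult_left_mono mult_mono) auto
  also have "\<dots> \<le> exp ((ln p1 - ln pj)/8) * exp (- (R\<^sup>2/(64*M\<^sup>2)) - 2)"
    by (intro mult_left_mono) (auto simp: exp_add[symmetric])
  finally show ?thesis using int by simp
qed



lemma min_exp_le: "min 1 (exp L) \<le> exp ((L::real)/8)"
proof (cases "L \<le> 0")
  case True then have "exp L \<le> exp (L/8)" by simp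
  then show ?thesis by linarith
next
  case False then have "1 \<le> exp (L/8)" by simp
  then show ?thesis by linarith
qed

lemma wbound:
  fixes P :: "nat \<Rightarrow> real" and Mu :: "nat \<Rightarrow> real^'d" and S :: "nat \<Rightarrow> real"
  assumes j: "j \<in> {1..k}" "j \<noteq> 1" and P: "\<forall>i\<in>{1..k}. P i > 0"
  shows "estep_weight k P Mu S 1 x \<le> exp ((ln (P 1) + (- (norm (x - Mu 1))\<^sup>2 / (2 * (S 1)\<^sup>2) - real CARD('d) * ln ((S 1)\<^sup>2) / 2)
             - (ln (P j) + (- (norm (x - Mu j))\<^sup>2 / (2 * (S j)\<^sup>2) - real CARD('d) * ln ((S j)\<^sup>2) / 2))) / 8)"
    and "estep_weight k P Mu S 1 x \<ge> 0"
proof -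
  define E where "E = (\<lambda>l. - (norm (x - Mu l))\<^sup>2 / (2 * (S l)\<^sup>2) - real CARD('d) * ln ((S l)\<^sup>2) / 2)"
  have ct: "comp_term P Mu S l x = P l * exp (E l)" for l by (simp add: comp_term_def E_def)
  have one: "1 \<in> {1..k}" using j by auto
  have pos: "comp_term P Mu S l x > 0" if "l \<in> {1..k}" for l using P that by (simp add: ct)
  have sub: "{1, j} \<subseteq> {1..k}" using j one by auto
  have "(\<Sum>l\<in>{1, j}. comp_term P Mu S l x) \<le> (\<Sum>l = 1..k. comp_term P Mu S l x)"
    by (rule sum_mono2) (use sub pos in \<open>auto intro: less_imp_le\<close>)
  then have ssum: "comp_term P Mu S 1 x + comp_term P Mu S j x \<le> (\<Sum>l = 1..k. comp_term P Mu S l x)"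
    using j by simp
  define c1 where "c1 = comp_term P Mu S 1 x"
  define cj where "cj = comp_term P Mu S j x"
  have c1p: "c1 > 0" and cjp: "cj > 0" using pos one j by (auto simp: c1_def cj_def)
  have w: "estep_weight k P Mu S 1 x \<le> c1 / (c1 + cj)"
    unfolding estep_weight_def c1_def[symmetric]
    using ssum c1p cjp by (intro divide_left_mono) (auto simp: c1_def cj_def)
  have "c1 / (c1 + cj) \<le> min 1 (c1 / cj)" using c1p cjp by (auto simp: field_simps)
  also have "c1 / cj = exp (ln c1 - ln cj)" using c1p cjp by (simp add: exp_diff)
  also have "min 1 (exp (ln c1 - ln cj)) \<le> exp ((ln c1 - ln cj)/8)" by (rule min_exp_le)
  also have "ln c1 - ln cj = ln (P 1) + E 1 - (ln (P j) + E j)"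
  proof -
    have "P 1 > 0" "P j > 0" using P one j by auto
    then show ?thesis by (simp add: c1_def cj_def ct ln_mult)
  qed
  finally show "estep_weight k P Mu S 1 x \<le> exp ((ln (P 1) + (- (norm (x - Mu 1))\<^sup>2 / (2 * (S 1)\<^sup>2) - real CARD('d) * ln ((S 1)\<^sup>2) / 2)
             - (ln (P j) + (- (norm (x - Mu j))\<^sup>2 / (2 * (S j)\<^sup>2) - real CARD('d) * ln ((S j)\<^sup>2) / 2))) / 8)"
    using w by (simp add: E_def)
  have "0 < (\<Sum>l = 1..k. comp_term P Mu S l x)" using ssum c1p cjp by (simp add: c1_def cj_def)
  then show "estep_weight k P Mu S 1 x \<ge> 0" using c1p by (simp add: estep_weight_def c1_def)
qed


lemma cosh_aux:
  fixes a I tau :: real assumes tau: "tau > 0"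
  shows "exp a \<le> exp (a + 1 * I / tau) + exp (a + -1 * I / tau)"
    and "\<bar>I\<bar> * exp a \<le> tau * (exp (a + 1 * I / tau) + exp (a + -1 * I / tau))"
proof -
  define z where "z = I / tau"
  have e1: "exp (a + 1 * I / tau) = exp a * exp z" by (simp add: z_def exp_add)
  have e2: "exp (a + -1 * I / tau) = exp a * exp (-z)" by (simp add: z_def exp_add[symmetric])
  have za: "\<bar>z\<bar> \<le> exp z + exp (-z)"
  proof (cases "z \<ge> 0")
    case True then have "\<bar>z\<bar> \<le> exp z" using exp_ge_add_one_self[of z] by linarith
    then show ?thesis by (smt (verit) exp_gt_zero)
  next
    case False then have "\<bar>z\<bar> \<le> exp (-z)" using exp_ge_add_one_self[of "-z"] by simp
    then show ?thesis by (smt (verit) exp_gt_zero)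
  qed
  have z1: "1 \<le> exp z + exp (-z)"
  proof (cases "z \<ge> 0")
    case True then have "1 \<le> exp z" by simp
    then show ?thesis by (smt (verit) exp_gt_zero)
  next
    case False then have "1 \<le> exp (-z)" by simp
    then show ?thesis by (smt (verit) exp_gt_zero)
  qed
  show "exp a \<le> exp (a + 1 * I / tau) + exp (a + -1 * I / tau)"
    unfolding e1 e2 using mult_left_mono[OF z1, of "exp a"] by (simp add: algebra_simps)
  have "\<bar>I\<bar> = tau * \<bar>z\<bar>" using tau by (simp add: z_def abs_div)
  then have "\<bar>I\<bar> * exp a = tau * (\<bar>z\<bar> * exp a)" by simp
  also have "\<dots> \<le> tau * ((exp z + exp (-z)) * exp a)"
    using za tau by (intro mult_left_mono mult_right_mono) auto
  finally show "\<bar>I\<bar> * exp a \<le> tau * (exp (a + 1 * I / tau) + exp (a + -1 * I / tau))"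
    unfolding e1 e2 by (simp add: algebra_simps)
qed

lemma exp8_le: "exp ((ln a - ln b)/8) \<le> 1 + a / b" if "a > 0" "b > 0" for a b :: real
proof (cases "ln a - ln b \<le> 0")
  case True then have "exp ((ln a - ln b)/8) \<le> 1" by simp
  then show ?thesis using that by (smt (verit) divide_pos_pos)
next
  case False then have "exp ((ln a - ln b)/8) \<le> exp (ln a - ln b)" by simp
  also have "\<dots> = a / b" using that by (simp add: exp_diff)
  finally show ?thesis by simp
qed

theorem corollary3p1:
  fixes k :: nat and C :: real
    and pis :: "nat \<Rightarrow> real" and mus :: "nat \<Rightarrow> real ^ 'd" and sigs :: "nat \<Rightarrow> real"
    and p :: "nat \<Rightarrow> real" and m :: "nat \<Rightarrow> real ^ 'd" and sg :: "nat \<Rightarrow> real"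
    and j :: nat and s :: "real ^ 'd"
  assumes C: "C \<ge> 64"
    and pis_pos: "\<forall>i\<in>{1..k}. pis i > 0"
    and pis_sum: "(\<Sum>i = 1..k. pis i) = 1"
    and sigs_pos: "\<forall>i\<in>{1..k}. sigs i > 0"
    and sep: "\<forall>i\<in>{1..k}. \<forall>l\<in>{1..k}. i \<noteq> l \<longrightarrow>
        norm (mus i - mus l) \<ge> C * max (sigs i) (sigs l) *
          sqrt (ln (real k) + ln ((Max (sigs ` {1..k}) / Min (sigs ` {1..k})) *
                                  (Max (pis ` {1..k}) / Min (pis ` {1..k}))))"
    and mu_close: "\<forall>i\<in>{1..k}. norm (m i - mus i) \<le>
        sigs i / 16 * Min ((\<lambda>l. norm (mus i - mus l) / max (sigs i) (sigs l)) ` {l\<in>{1..k}. l \<noteq> i})"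
    and pi_close: "\<forall>i\<in>{1..k}. \<bar>p i - pis i\<bar> \<le> pis i / 2"
    and sig_close: "\<forall>i\<in>{1..k}. \<bar>(sg i)\<^sup>2 - (sigs i)\<^sup>2\<bar> \<le> 0.5 * (sigs i)\<^sup>2 / sqrt (real CARD('d))"
    and j: "j \<in> {1..k}" "j \<noteq> 1"
    and s: "norm s = 1"
  defines "R \<equiv> norm (mus j - mus 1)"
    and "\<beta> \<equiv> (norm (mus j - mus 1))\<^sup>2 / (64 * (max (sigs 1) (sigs j))\<^sup>2)"
    and "\<Delta> \<equiv> (\<lambda>x. estep_weight k p m sg 1 x - estep_weight k pis mus sigs 1 x)"
  shows "gauss_expect (mus j) (sigs j) \<Delta> \<le> (3 * (pis 1 / pis j) + 5) * exp (- \<beta>) \<and>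
         \<bar>gauss_expect (mus j) (sigs j) (\<lambda>x. \<Delta> x * inner (x - mus j) s)\<bar>
           \<le> (3 * (pis 1 / pis j) * sigs j + 5 * R) * exp (- \<beta>)"
proof -
  define N where "N = real CARD('d)"
  define M where "M = max (sigs 1) (sigs j)"
  have one: "1 \<in> {1..k}" and k2: "k \<ge> 2" using j by auto
  have tau: "sigs j > 0" and sig1: "sigs 1 > 0" using sigs_pos j one by auto
  have Mp: "M > 0" "sigs 1 \<le> M" "sigs j \<le> M" using tau sig1 by (auto simp: M_def)
  have M': "M = max (sigs 1) (sigs j)" by (simp add: M_def)
  have pi1: "pis 1 > 0" and pij: "pis j > 0" using pis_pos j one by auto
  have ppos: "\<forall>i\<in>{1..k}. p i > 0"
  proof
    fix i assume "i \<in> {1..k}"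
    then have "pis i > 0" "\<bar>p i - pis i\<bar> \<le> pis i / 2" using pis_pos pi_close by auto
    then show "p i > 0" by linarith
  qed
  have p1: "p 1 > 0" "p 1 \<le> 3/2 * pis 1"
  proof -
    have "\<bar>p 1 - pis 1\<bar> \<le> pis 1 / 2" using pi_close one by auto
    then show "p 1 \<le> 3/2 * pis 1" by linarith
    show "p 1 > 0" using ppos one by auto
  qed
  have pj: "p j > 0" "p j \<ge> pis j / 2"
  proof -
    have "\<bar>p j - pis j\<bar> \<le> pis j / 2" using pi_close j by auto
    then show "p j \<ge> pis j / 2" by linarith
    show "p j > 0" using ppos j by auto
  qed
  define L where "L = ln (real k) + ln ((Max (sigs ` {1..k}) / Min (sigs ` {1..k})) *
                                  (Max (pis ` {1..k}) / Min (pis ` {1..k})))"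
  have ratio: "Max (f ` {1..k}) / Min (f ` {1..k}) \<ge> 1" if fp: "\<forall>i\<in>{1..k}. f i > (0::real)" for f
  proof -
    have fin: "finite (f ` {1..k})" "f ` {1..k} \<noteq> {}" using one by auto
    have "Min (f ` {1..k}) \<in> f ` {1..k}" using fin by (rule Min_in)
    then have mp: "Min (f ` {1..k}) > 0" using fp by auto
    have "Min (f ` {1..k}) \<le> f 1" using fin one by (intro Min_le) auto
    also have "f 1 \<le> Max (f ` {1..k})" using fin one by (intro Max_ge) auto
    finally show ?thesis using mp by simp
  qed
  have L: "L \<ge> 2/3"
  proof -
    have "ln 2 \<le> ln (real k)" using k2 by simp
    then have a: "2/3 \<le> ln (real k)" using ln2_ge_two_thirds by linarith
    have r1: "Max (sigs ` {1..k}) / Min (sigs ` {1..k}) \<ge> 1" using ratio sigs_pos by blast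
    have r2: "Max (pis ` {1..k}) / Min (pis ` {1..k}) \<ge> 1" using ratio pis_pos by blast
    have "1 \<le> (Max (sigs ` {1..k}) / Min (sigs ` {1..k})) * (Max (pis ` {1..k}) / Min (pis ` {1..k}))"
      using r1 r2 by (metis mult_mono' mult_1 zero_le_one order_trans)
    then have "ln ((Max (sigs ` {1..k}) / Min (sigs ` {1..k})) * (Max (pis ` {1..k}) / Min (pis ` {1..k}))) \<ge> 0"
      by simp
    then show ?thesis using a by (simp add: L_def)
  qed
  have Rge: "R \<ge> C * M * sqrt L"
    using sep j one unfolding R_def M_def L_def by (auto simp: max.commute)
  have R0: "R \<ge> 0" by (simp add: R_def)
  have R2: "R\<^sup>2 \<ge> 2000 * M\<^sup>2"
  proof -
    have sL: "sqrt L \<ge> 0" using L by simp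
    have "64 * M * sqrt L \<le> C * M * sqrt L" using C Mp sL by (intro mult_right_mono) auto
    then have "64 * M * sqrt L \<le> R" using Rge by linarith
    then have "(64 * M * sqrt L)\<^sup>2 \<le> R\<^sup>2" using Mp sL by (intro power_mono) auto
    moreover have "(64 * M * sqrt L)\<^sup>2 = 4096 * M\<^sup>2 * L" using L by (simp add: power_mult_distrib)
    moreover have "4096 * M\<^sup>2 * (2/3) \<le> 4096 * M\<^sup>2 * L" using L by (intro mult_left_mono) auto
    moreover have "M\<^sup>2 \<ge> 0" by simp
    ultimately show ?thesis by linarith
  qed
  have tauR: "sigs j \<le> R"
  proof -
    have "(sigs j)\<^sup>2 \<le> M\<^sup>2" using Mp tau by (intro power_mono) auto
    then have "(sigs j)\<^sup>2 \<le> R\<^sup>2" using R2 by (smt (verit) zero_le_power2)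
    then show ?thesis using R0 tau by (simp add: power2_le_iff_abs_le)
  qed
  have beta: "\<beta> = R\<^sup>2 / (64 * M\<^sup>2)" by (simp add: \<beta>_def R_def M_def)
  have fin1: "finite ((\<lambda>l. norm (mus i - mus l) / max (sigs i) (sigs l)) ` {l\<in>{1..k}. l \<noteq> i})" for i
    by simp
  have mc1: "norm (m 1 - mus 1) \<le> sigs 1 * R / (16 * M)"
  proof -
    have "Min ((\<lambda>l. norm (mus 1 - mus l) / max (sigs 1) (sigs l)) ` {l\<in>{1..k}. l \<noteq> 1})
          \<le> norm (mus 1 - mus j) / max (sigs 1) (sigs j)"
      using j by (intro Min_le fin1) auto
    also have "\<dots> = R / M" by (simp add: R_def M_def norm_minus_commute)
    finally have "sigs 1 / 16 * Min ((\<lambda>l. norm (mus 1 - mus l) / max (sigs 1) (sigs l)) ` {l\<in>{1..k}. l \<noteq> 1})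
          \<le> sigs 1 / 16 * (R / M)" using sig1 by (intro mult_left_mono) auto
    moreover have "sigs 1 / 16 * (R / M) = sigs 1 * R / (16 * M)" by simp
    ultimately show ?thesis using mu_close[rule_format, OF one] by linarith
  qed
  have mcj: "norm (m j - mus j) \<le> sigs j * R / (16 * M)"
  proof -
    have "Min ((\<lambda>l. norm (mus j - mus l) / max (sigs j) (sigs l)) ` {l\<in>{1..k}. l \<noteq> j})
          \<le> norm (mus j - mus 1) / max (sigs j) (sigs 1)"
      using j one by (intro Min_le fin1) auto
    also have "\<dots> = R / M" by (simp add: R_def M_def max.commute)
    finally have "sigs j / 16 * Min ((\<lambda>l. norm (mus j - mus l) / max (sigs j) (sigs l)) ` {l\<in>{1..k}. l \<noteq> j})
          \<le> sigs j / 16 * (R / M)" using tau by (intro mult_left_mono) auto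
    moreover have "sigs j / 16 * (R / M) = sigs j * R / (16 * M)" by simp
    ultimately show ?thesis using mu_close[rule_format, OF j(1)] by linarith
  qed
  have c1e: "norm (m 1 - mus j) \<ge> 15/16 * R"
  proof -
    have "sigs 1 * R / (16 * M) \<le> M * R / (16 * M)" using Mp R0 by (intro divide_right_mono mult_right_mono) auto
    also have "\<dots> = R / 16" using Mp by simp
    finally have "norm (m 1 - mus 1) \<le> R / 16" using mc1 by linarith
    moreover have "R \<le> norm (m 1 - mus j) + norm (m 1 - mus 1)"
      unfolding R_def using norm_triangle_ineq4[of "m 1 - mus 1" "m 1 - mus j"] by (simp add: norm_minus_commute)
    ultimately show ?thesis by linarith
  qed
  have c1t: "norm (mus 1 - mus j) \<ge> 15/16 * R" using R0 by (simp add: R_def norm_minus_commute)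
  have cjt: "norm (mus j - mus j) \<le> sigs j * R / (16 * M)" using tau R0 Mp by simp
  have N1: "N \<ge> 1" by (simp add: N_def)
  have sN: "sqrt N \<ge> 1" using N1 by simp
  have vb: "\<bar>(sg i)\<^sup>2 - (sigs i)\<^sup>2\<bar> \<le> (sigs i)\<^sup>2 / 2" if "i \<in> {1..k}" for i
  proof -
    have "0.5 * (sigs i)\<^sup>2 / sqrt N \<le> 0.5 * (sigs i)\<^sup>2 / 1" using sN by (intro divide_left_mono) auto
    moreover have "\<bar>(sg i)\<^sup>2 - (sigs i)\<^sup>2\<bar> \<le> 0.5 * (sigs i)\<^sup>2 / sqrt N"
      using sig_close[rule_format, OF that] by (simp add: N_def)
    ultimately show ?thesis by simp
  qed
  have s1e: "(sg 1)\<^sup>2 > 0" "(sg 1)\<^sup>2 \<le> 3/2 * (sigs 1)\<^sup>2"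
    using vb[OF one] sig1 by (auto simp: abs_le_iff) (smt (verit) zero_less_power)
  have sje: "(sg j)\<^sup>2 \<ge> (sigs j)\<^sup>2 / 2" "(sg j)\<^sup>2 \<le> 3/2 * (sigs j)\<^sup>2"
    using vb[OF j(1)] by linarith+
  have sjp: "(sg j)\<^sup>2 > 0" using sje(1) tau by (smt (verit) zero_less_power divide_pos_pos)
  have dl: "-1/2 \<le> (sigs j)\<^sup>2/(sg j)\<^sup>2 - 1" "(sigs j)\<^sup>2/(sg j)\<^sup>2 - 1 \<le> 1"
           "real CARD('d) * ((sigs j)\<^sup>2/(sg j)\<^sup>2 - 1)\<^sup>2 \<le> 1"
  proof -
    have "(sigs j)\<^sup>2/(sg j)\<^sup>2 \<ge> (sigs j)\<^sup>2/(3/2 * (sigs j)\<^sup>2)"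
      using sje sjp tau by (intro divide_left_mono) auto
    then show "-1/2 \<le> (sigs j)\<^sup>2/(sg j)\<^sup>2 - 1" using tau by simp
    have "(sigs j)\<^sup>2/(sg j)\<^sup>2 \<le> (sigs j)\<^sup>2/((sigs j)\<^sup>2 / 2)"
      using sje sjp tau by (intro divide_left_mono) auto
    then show "(sigs j)\<^sup>2/(sg j)\<^sup>2 - 1 \<le> 1" using tau by simp
    have eq: "(sigs j)\<^sup>2/(sg j)\<^sup>2 - 1 = ((sigs j)\<^sup>2 - (sg j)\<^sup>2) / (sg j)\<^sup>2" using sjp by (simp add: field_simps)
    have a: "\<bar>(sigs j)\<^sup>2 - (sg j)\<^sup>2\<bar> \<le> 0.5 * (sigs j)\<^sup>2 / sqrt N"
      using sig_close j by (simp add: N_def abs_minus_commute)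
    have "((sigs j)\<^sup>2/(sg j)\<^sup>2 - 1)\<^sup>2 = ((sigs j)\<^sup>2 - (sg j)\<^sup>2)\<^sup>2 / ((sg j)\<^sup>2)\<^sup>2"
      unfolding eq by (simp add: power_divide)
    also have "\<dots> \<le> (0.5 * (sigs j)\<^sup>2 / sqrt N)\<^sup>2 / ((sigs j)\<^sup>2 / 2)\<^sup>2"
    proof (rule frac_le)
      show "((sigs j)\<^sup>2 - (sg j)\<^sup>2)\<^sup>2 \<le> (0.5 * (sigs j)\<^sup>2 / sqrt N)\<^sup>2"
        using a by (simp add: power2_le_iff_abs_le)
      show "((sigs j)\<^sup>2 / 2)\<^sup>2 \<le> ((sg j)\<^sup>2)\<^sup>2" using sje tau by (intro power_mono) auto
    qed (use tau in auto)
    also have "\<dots> = 1 / N" using tau N1 by (simp add: power2_eq_square field_simps)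
    finally show "real CARD('d) * ((sigs j)\<^sup>2/(sg j)\<^sup>2 - 1)\<^sup>2 \<le> 1" using N1
      by (simp add: N_def field_simps)
  qed
  have dlt: "-1/2 \<le> (sigs j)\<^sup>2/(sigs j)\<^sup>2 - 1" "(sigs j)\<^sup>2/(sigs j)\<^sup>2 - 1 \<le> 1"
           "real CARD('d) * ((sigs j)\<^sup>2/(sigs j)\<^sup>2 - 1)\<^sup>2 \<le> 1" using tau by auto
  define Ee where "Ee = (\<lambda>x. (ln (p 1) + (- (norm (x - m 1))\<^sup>2 / (2 * (sg 1)\<^sup>2) - real CARD('d) * ln ((sg 1)\<^sup>2) / 2)
             - (ln (p j) + (- (norm (x - m j))\<^sup>2 / (2 * (sg j)\<^sup>2) - real CARD('d) * ln ((sg j)\<^sup>2) / 2))) / 8)"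
  define Et where "Et = (\<lambda>x. (ln (pis 1) + (- (norm (x - mus 1))\<^sup>2 / (2 * (sigs 1)\<^sup>2) - real CARD('d) * ln ((sigs 1)\<^sup>2) / 2)
             - (ln (pis j) + (- (norm (x - mus j))\<^sup>2 / (2 * (sigs j)\<^sup>2) - real CARD('d) * ln ((sigs j)\<^sup>2) / 2))) / 8)"
  define Fe where "Fe = (\<lambda>sgn x. gauss_density (mus j) (sigs j) x * exp (Ee x + sgn * inner (x - mus j) s / sigs j))"
  define Ft where "Ft = (\<lambda>sgn x. gauss_density (mus j) (sigs j) x * exp (Et x + sgn * inner (x - mus j) s / sigs j))"
  have s1t: "(sigs 1)\<^sup>2 > 0" "(sigs 1)\<^sup>2 \<le> 3/2 * (sigs 1)\<^sup>2" using sig1 by auto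
  have sjt: "(sigs j)\<^sup>2 \<ge> (sigs j)\<^sup>2 / 2" using tau by auto
  have pp: "pis 1 > 0" "pis j > 0" using pi1 pij by auto
  have coreE: "integrable lborel (Fe sgn) \<and> integral\<^sup>L lborel (Fe sgn) \<le> exp ((ln (p 1) - ln (p j)) / 8) * exp (- (R\<^sup>2/(64*M\<^sup>2)) - 2)"
    if "\<bar>sgn\<bar> \<le> 1" for sgn
    unfolding Fe_def Ee_def
    by (rule core[OF tau sig1 M' R2 R0 s1e sje(1) dl c1e mcj p1(1) pj(1) that s])
  have coreT: "integrable lborel (Ft sgn) \<and> integral\<^sup>L lborel (Ft sgn) \<le> exp ((ln (pis 1) - ln (pis j)) / 8) * exp (- (R\<^sup>2/(64*M\<^sup>2)) - 2)"
    if "\<bar>sgn\<bar> \<le> 1" for sgn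
    unfolding Ft_def Et_def
    by (rule core[OF tau sig1 M' R2 R0 s1t sjt dlt c1t cjt pp that s])
  have gd0: "gauss_density (mus j) (sigs j) x \<ge> 0" for x by (simp add: gauss_density_def)
  have we: "estep_weight k p m sg 1 x \<le> exp (Ee x)" "estep_weight k p m sg 1 x \<ge> 0" for x
    unfolding Ee_def using wbound[OF j ppos] by auto
  have wt: "estep_weight k pis mus sigs 1 x \<le> exp (Et x)" "estep_weight k pis mus sigs 1 x \<ge> 0" for x
    unfolding Et_def using wbound[OF j pis_pos] by auto
  have pw1: "gauss_density (mus j) (sigs j) x * \<Delta> x \<le> Fe 1 x + Fe (-1) x" for x
  proof -
    have "\<Delta> x \<le> exp (Ee x)" using we[of x] wt[of x] by (simp add: \<Delta>_def)
    also have "\<dots> \<le> exp (Ee x + 1 * inner (x - mus j) s / sigs j) + exp (Ee x + -1 * inner (x - mus j) s / sigs j)"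
      by (rule cosh_aux(1)[OF tau])
    finally have h: "\<Delta> x \<le> exp (Ee x + 1 * inner (x - mus j) s / sigs j) + exp (Ee x + -1 * inner (x - mus j) s / sigs j)" .
    have "gauss_density (mus j) (sigs j) x * \<Delta> x \<le> gauss_density (mus j) (sigs j) x *
          (exp (Ee x + 1 * inner (x - mus j) s / sigs j) + exp (Ee x + -1 * inner (x - mus j) s / sigs j))"
      using h gd0[of x] by (rule mult_left_mono)
    also have "\<dots> = Fe 1 x + Fe (-1) x" unfolding Fe_def by (simp add: distrib_left)
    finally show ?thesis .
  qed
  have pw2: "\<bar>gauss_density (mus j) (sigs j) x * (\<Delta> x * inner (x - mus j) s)\<bar>
      \<le> sigs j * (Fe 1 x + Fe (-1) x + (Ft 1 x + Ft (-1) x))" for x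
  proof -
    let ?I = "inner (x - mus j) s"
    have "\<bar>\<Delta> x\<bar> \<le> exp (Ee x) + exp (Et x)" using we[of x] wt[of x] by (simp add: \<Delta>_def abs_le_iff)
    then have "\<bar>\<Delta> x\<bar> * \<bar>?I\<bar> \<le> (exp (Ee x) + exp (Et x)) * \<bar>?I\<bar>" by (rule mult_right_mono) simp
    also have "\<dots> = \<bar>?I\<bar> * exp (Ee x) + \<bar>?I\<bar> * exp (Et x)" by (simp add: algebra_simps)
    also have "\<dots> \<le> sigs j * (exp (Ee x + 1 * ?I / sigs j) + exp (Ee x + -1 * ?I / sigs j))
                   + sigs j * (exp (Et x + 1 * ?I / sigs j) + exp (Et x + -1 * ?I / sigs j))"
      by (intro add_mono cosh_aux(2)[OF tau])
    finally have a: "\<bar>\<Delta> x\<bar> * \<bar>?I\<bar> \<le> \<dots>" .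
    have "\<bar>gauss_density (mus j) (sigs j) x * (\<Delta> x * ?I)\<bar> = gauss_density (mus j) (sigs j) x * (\<bar>\<Delta> x\<bar> * \<bar>?I\<bar>)"
      using gd0[of x] by (simp add: abs_mult)
    also have "\<dots> \<le> gauss_density (mus j) (sigs j) x * (sigs j * (exp (Ee x + 1 * ?I / sigs j) + exp (Ee x + -1 * ?I / sigs j))
                   + sigs j * (exp (Et x + 1 * ?I / sigs j) + exp (Et x + -1 * ?I / sigs j)))"
      using a gd0[of x] by (rule mult_left_mono)
    also have "\<dots> = sigs j * (Fe 1 x + Fe (-1) x + (Ft 1 x + Ft (-1) x))"
      unfolding Fe_def Ft_def by (simp add: algebra_simps del: mult_1 mult_minus1)
    finally show ?thesis .
  qed
  define X where "X = pis 1 / pis j"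
  have X0: "X > 0" using pi1 pij by (simp add: X_def)
  have Ge: "exp ((ln (p 1) - ln (p j)) / 8) \<le> 1 + 3 * X"
  proof -
    have "p 1 / p j \<le> (3/2 * pis 1) / (pis j / 2)" using p1 pj pi1 pij by (intro frac_le) auto
    also have "\<dots> = 3 * X" by (simp add: X_def)
    finally show ?thesis using exp8_le[OF p1(1) pj(1)] by linarith
  qed
  have Gt: "exp ((ln (pis 1) - ln (pis j)) / 8) \<le> 1 + X" using exp8_le[OF pi1 pij] by (simp add: X_def)
  have e2: "exp (- (R\<^sup>2/(64*M\<^sup>2)) - 2) \<le> exp (- \<beta>) / 4"
  proof -
    define a where "a = - (R\<^sup>2/(64*M\<^sup>2)) - 2"
    have "2 \<le> exp (1::real)" using exp_ge_add_one_self[of 1] by simp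
    then have "2 * 2 \<le> exp (1::real) * exp 1" by (intro mult_mono) auto
    moreover have "exp (1::real) * exp 1 = exp 2" using exp_add[of "1::real" 1] by simp
    ultimately have four: "4 \<le> exp (2::real)" by simp
    have "exp a * exp 2 = exp (a + 2)" by (rule exp_add[symmetric])
    also have "a + 2 = - \<beta>" by (simp add: a_def beta)
    finally have ea: "exp a * exp 2 = exp (- \<beta>)" .
    have "exp a * 4 \<le> exp a * exp 2" using four by (intro mult_left_mono) auto
    then show ?thesis using ea unfolding a_def by linarith
  qed
  have eb0: "exp (- \<beta>) > 0" by simp
  have iE: "integrable lborel (Fe 1)" "integrable lborel (Fe (-1))" using coreE[of 1] coreE[of "-1"] by auto
  have iT: "integrable lborel (Ft 1)" "integrable lborel (Ft (-1))" using coreT[of 1] coreT[of "-1"] by auto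
  have IE: "integral\<^sup>L lborel (Fe 1) + integral\<^sup>L lborel (Fe (-1)) \<le> 2 * (1 + 3 * X) * (exp (- \<beta>) / 4)"
  proof -
    have "integral\<^sup>L lborel (Fe 1) + integral\<^sup>L lborel (Fe (-1)) \<le> 2 * (exp ((ln (p 1) - ln (p j)) / 8) * exp (- (R\<^sup>2/(64*M\<^sup>2)) - 2))"
      using coreE[of 1] coreE[of "-1"] by auto
    also have "\<dots> \<le> 2 * ((1 + 3 * X) * (exp (- \<beta>) / 4))"
      using Ge e2 X0 by (intro mult_left_mono mult_mono) auto
    finally show ?thesis by (simp only: mult.assoc)
  qed
  have IT: "integral\<^sup>L lborel (Ft 1) + integral\<^sup>L lborel (Ft (-1)) \<le> 2 * (1 + X) * (exp (- \<beta>) / 4)"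
  proof -
    have "integral\<^sup>L lborel (Ft 1) + integral\<^sup>L lborel (Ft (-1)) \<le> 2 * (exp ((ln (pis 1) - ln (pis j)) / 8) * exp (- (R\<^sup>2/(64*M\<^sup>2)) - 2))"
      using coreT[of 1] coreT[of "-1"] by auto
    also have "\<dots> \<le> 2 * ((1 + X) * (exp (- \<beta>) / 4))"
      using Gt e2 X0 by (intro mult_left_mono mult_mono) auto
    finally show ?thesis by (simp only: mult.assoc)
  qed
  have claim1: "gauss_expect (mus j) (sigs j) \<Delta> \<le> (3 * (pis 1 / pis j) + 5) * exp (- \<beta>)"
  proof (cases "integrable lborel (\<lambda>x. gauss_density (mus j) (sigs j) x * \<Delta> x)")
    case True
    have "gauss_expect (mus j) (sigs j) \<Delta> \<le> (\<integral>x. Fe 1 x + Fe (-1) x \<partial>lborel)"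
      unfolding gauss_expect_def using True iE pw1 by (intro integral_mono) auto
    also have "\<dots> = integral\<^sup>L lborel (Fe 1) + integral\<^sup>L lborel (Fe (-1))" using iE by simp
    also have "\<dots> \<le> 2 * (1 + 3 * X) * (exp (- \<beta>) / 4)" by (rule IE)
    also have "\<dots> = (1 + 3 * X) / 2 * exp (- \<beta>)" by simp
    also have "\<dots> \<le> (3 * X + 5) * exp (- \<beta>)" using X0 eb0 by (intro mult_right_mono) auto
    finally show ?thesis by (simp add: X_def)
  next
    case False
    then have "gauss_expect (mus j) (sigs j) \<Delta> = 0" by (simp add: gauss_expect_def not_integrable_integral_eq)
    then show ?thesis using pi1 pij eb0 by simp
  qed
  have claim2: "\<bar>gauss_expect (mus j) (sigs j) (\<lambda>x. \<Delta> x * inner (x - mus j) s)\<bar>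
           \<le> (3 * (pis 1 / pis j) * sigs j + 5 * R) * exp (- \<beta>)"
  proof (cases "integrable lborel (\<lambda>x. gauss_density (mus j) (sigs j) x * (\<Delta> x * inner (x - mus j) s))")
    case True
    have ig: "integrable lborel (\<lambda>x. sigs j * (Fe 1 x + Fe (-1) x + (Ft 1 x + Ft (-1) x)))"
      using iE iT by auto
    have "\<bar>gauss_expect (mus j) (sigs j) (\<lambda>x. \<Delta> x * inner (x - mus j) s)\<bar>
        \<le> (\<integral>x. sigs j * (Fe 1 x + Fe (-1) x + (Ft 1 x + Ft (-1) x)) \<partial>lborel)"
      unfolding gauss_expect_def using True ig pw2 by (intro integral_abs_bound_integral) auto
    also have "\<dots> = sigs j * ((integral\<^sup>L lborel (Fe 1) + integral\<^sup>L lborel (Fe (-1))) +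
                     (integral\<^sup>L lborel (Ft 1) + integral\<^sup>L lborel (Ft (-1))))" using iE iT by simp
    also have "\<dots> \<le> sigs j * (2 * (1 + 3 * X) * (exp (- \<beta>) / 4) + 2 * (1 + X) * (exp (- \<beta>) / 4))"
      using IE IT tau by (intro mult_left_mono add_mono) auto
    also have "\<dots> = sigs j * (1 + 2 * X) * exp (- \<beta>)" by (simp add: algebra_simps)
    also have "\<dots> \<le> (3 * X * sigs j + 5 * R) * exp (- \<beta>)"
    proof (rule mult_right_mono)
      have "sigs j * (1 + 2 * X) = sigs j + 2 * (X * sigs j)" by (simp add: algebra_simps)
      moreover have "X * sigs j \<ge> 0" using X0 tau by simp
      ultimately show "sigs j * (1 + 2 * X) \<le> 3 * X * sigs j + 5 * R" using tauR tau by linarith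
    qed (use eb0 in auto)
    finally show ?thesis by (simp add: X_def)
  next
    case False
    then have "gauss_expect (mus j) (sigs j) (\<lambda>x. \<Delta> x * inner (x - mus j) s) = 0"
      by (simp add: gauss_expect_def not_integrable_integral_eq)
    then show ?thesis using pi1 pij eb0 tau R0 by simp
  qed
  show ?thesis using claim1 claim2 by blast
qed

end
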